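(* Let $n$ be a positive integer with $n \equiv 1 \pmod{3}$. Then every $n \times n$ Latin square $L$ satisfies $$I(L) \ge \frac{4n(n-1)}{9},$$ where $$I(L) = \frac{1}{3} \sum_{0 \le r_1 < r_2 \le n-1} \left\lvert 3\, d(r_1,r_2) - n(n+1) \right\rvert$$ and $d(r_1,r_2) = \sum_{s=0}^{n-1} \lvert \mathrm{pos}(r_1,s) - \mathrm{pos}(r_2,s) \rvert$.
   Context: An $n \times n$ Latin square is an $n\times n$ array with entries in $\{0,\dots,n-1\}$ in which each symbol occurs exactly once in each row and exactly once in each column. Rows and columns are indexed by $\{0,\dots,n-1\}$. For a row $r$ and a symbol $s$, $\mathrm{pos}(r,s) \in \{0,\dots,n-1\}$ denotes the column in which symbol $s$ appears in row $r$. All absolute values are of ordinary integers; $I(L)$ is a rational number (the imbalance of $L$). *)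

theory Defs
  imports Complex_Main
begin

definition latin_square :: "nat \<Rightarrow> (nat \<Rightarrow> nat \<Rightarrow> nat) \<Rightarrow> bool" where
  "latin_square n L \<longleftrightarrow>
     (\<forall>r<n. \<forall>c<n. L r c < n) \<and>
     (\<forall>r<n. \<forall>s<n. \<exists>!c. c < n \<and> L r c = s) \<and>
     (\<forall>c<n. \<forall>s<n. \<exists>!r. r < n \<and> L r c = s)"

definition pos :: "nat \<Rightarrow> (nat \<Rightarrow> nat \<Rightarrow> nat) \<Rightarrow> nat \<Rightarrow> nat \<Rightarrow> nat" where
  "pos n L r s = (THE c. c < n \<and> L r c = s)"

definition row_dist :: "nat \<Rightarrow> (nat \<Rightarrow> nat \<Rightarrow> nat) \<Rightarrow> nat \<Rightarrow> nat \<Rightarrow> int" where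
  "row_dist n L r1 r2 = (\<Sum>s<n. \<bar>int (pos n L r1 s) - int (pos n L r2 s)\<bar>)"

definition imbalance :: "nat \<Rightarrow> (nat \<Rightarrow> nat \<Rightarrow> nat) \<Rightarrow> rat" where
  "imbalance n L = (1/3) * of_int (\<Sum>(r1, r2) \<in> {(r1, r2). r1 < r2 \<and> r2 < n}.
       \<bar>3 * row_dist n L r1 r2 - int n * (int n + 1)\<bar>)"

end

theory Submission
  imports Defs
begin

lemma pos_prop:
  assumes "latin_square n L" "r < n" "s < n"
  shows "pos n L r s < n \<and> L r (pos n L r s) = s"
proof -
  have "\<exists>!c. c < n \<and> L r c = s" using assms unfolding latin_square_def by blast
  then show ?thesis unfolding pos_def by (rule theI')
qed

lemma bij_col:
  assumes "latin_square n L" "s < n"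
  shows "bij_betw (\<lambda>r. pos n L r s) {..<n} {..<n}"
proof -
  have sub: "(\<lambda>r. pos n L r s) ` {..<n} \<subseteq> {..<n}"
  proof
    fix x assume "x \<in> (\<lambda>r. pos n L r s) ` {..<n}"
    then obtain r where "r < n" "x = pos n L r s" by auto
    then show "x \<in> {..<n}" using pos_prop[OF assms(1) _ assms(2), of r] by simp
  qed
  have inj: "inj_on (\<lambda>r. pos n L r s) {..<n}"
  proof (rule inj_onI)
    fix a b assume a: "a \<in> {..<n}" and b: "b \<in> {..<n}" and e: "pos n L a s = pos n L b s"
    let ?c = "pos n L a s"
    have pa: "pos n L a s < n \<and> L a (pos n L a s) = s" using pos_prop[OF assms(1) _ assms(2), of a] a by simp
    have pb: "pos n L b s < n \<and> L b (pos n L b s) = s" using pos_prop[OF assms(1) _ assms(2), of b] b by simp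
    have c2: "L b ?c = s" unfolding e using pb by (rule conjunct2)
    have c: "?c < n" "L a ?c = s" "L b ?c = s" using pa c2 by blast+
    have col: "\<forall>c<n. \<forall>s<n. \<exists>!r. r < n \<and> L r c = s" using assms(1) unfolding latin_square_def by (elim conjE)
    have ex: "\<exists>!r. r < n \<and> L r ?c = s" using col c(1) assms(2) by simp
    have u: "x = y" if "x < n" "L x ?c = s" "y < n" "L y ?c = s" for x y
      using ex that by (metis (no_types, lifting))
    show "a = b" by (rule u) (use a b c in auto)
  qed
  have "(\<lambda>r. pos n L r s) ` {..<n} = {..<n}" using endo_inj_surj[OF finite_lessThan sub inj] .
  then show ?thesis using inj unfolding bij_betw_def by simp
qed

lemma bij_row:
  assumes "latin_square n L" "r < n"
  shows "bij_betw (\<lambda>s. pos n L r s) {..<n} {..<n}"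
proof -
  have sub: "(\<lambda>s. pos n L r s) ` {..<n} \<subseteq> {..<n}"
  proof
    fix x assume "x \<in> (\<lambda>s. pos n L r s) ` {..<n}"
    then obtain s where "s < n" "x = pos n L r s" by auto
    then show "x \<in> {..<n}" using pos_prop[OF assms(1) assms(2), of s] by simp
  qed
  have inj: "inj_on (\<lambda>s. pos n L r s) {..<n}"
  proof (rule inj_onI)
    fix a b assume a: "a \<in> {..<n}" and b: "b \<in> {..<n}" and e: "pos n L r a = pos n L r b"
    have "a = L r (pos n L r a)" using pos_prop[OF assms(1) assms(2), of a] a by simp
    also have "\<dots> = L r (pos n L r b)" using e by (rule arg_cong)
    also have "\<dots> = b" using pos_prop[OF assms(1) assms(2), of b] b by simp
    finally show "a = b" .
  qed
  have "(\<lambda>s. pos n L r s) ` {..<n} = {..<n}" using endo_inj_surj[OF finite_lessThan sub inj] .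
  then show ?thesis using inj unfolding bij_betw_def by simp
qed

lemma reindex2:
  assumes "bij_betw f {..<n} {..<n}"
  shows "(\<Sum>i<n. \<Sum>j<n. g (f i) (f j)) = (\<Sum>i<n. \<Sum>j<n. (g i j :: int))"
proof -
  have "\<And>i. (\<Sum>j<n. g (f i) (f j)) = (\<Sum>j<n. g (f i) j)"
    using sum.reindex_bij_betw[OF assms] by blast
  then have "(\<Sum>i<n. \<Sum>j<n. g (f i) (f j)) = (\<Sum>i<n. (\<lambda>i. \<Sum>j<n. g i j) (f i))" by simp
  also have "\<dots> = (\<Sum>i<n. \<Sum>j<n. g i j)" using sum.reindex_bij_betw[OF assms, of "\<lambda>i. \<Sum>j<n. g i j"] by simp
  finally show ?thesis .
qed

lemma aux1: "2 * (\<Sum>i<n. \<bar>int i - int n\<bar>) = int n * (int n + 1)"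
proof (induction n)
  case 0 then show ?case by simp
next
  case (Suc n)
  have "(\<Sum>i<Suc n. \<bar>int i - int (Suc n)\<bar>) = (\<Sum>i<n. \<bar>int i - int n\<bar>) + int n + 1"
  proof -
    have "(\<Sum>i<n. \<bar>int i - int (Suc n)\<bar>) = (\<Sum>i<n. \<bar>int i - int n\<bar> + 1)"
      by (rule sum.cong) auto
    then show ?thesis by (simp add: sum.distrib)
  qed
  then show ?case using Suc by (simp add: algebra_simps)
qed

lemma Tval: "3 * (\<Sum>i<n. \<Sum>j<n. \<bar>int i - int j\<bar>) = int n * (int n + 1) * (int n - 1)"
proof (induction n)
  case 0 then show ?case by simp
next
  case (Suc n)
  have a: "(\<Sum>j<n. \<bar>int n - int j\<bar>) = (\<Sum>i<n. \<bar>int i - int n\<bar>)"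
    by (rule sum.cong) auto
  have "(\<Sum>i<Suc n. \<Sum>j<Suc n. \<bar>int i - int j\<bar>) =
     (\<Sum>i<n. \<Sum>j<n. \<bar>int i - int j\<bar>) + 2 * (\<Sum>i<n. \<bar>int i - int n\<bar>)"
    using a by (simp add: sum.distrib)
  then show ?case using Suc aux1[of n] by (simp add: algebra_simps)
qed

lemma symsplit:
  fixes n :: nat
  assumes "\<And>i j. g i j = g j i"
  shows "(\<Sum>i<n. \<Sum>j<n. g i j) = 2 * (\<Sum>j<n. \<Sum>i<j. g i j) + (\<Sum>i<n. (g i i :: int))"
proof (induction n)
  case 0 then show ?case by simp
next
  case (Suc n)
  have a: "(\<Sum>j<n. g n j) = (\<Sum>i<n. g i n)" using assms by simp
  show ?case using Suc a by (simp add: sum.distrib)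
qed

lemma pairsum:
  fixes n :: nat
  shows "(\<Sum>(r1, r2) \<in> {(r1, r2). r1 < r2 \<and> r2 < n}. h r1 r2) = (\<Sum>j<n. \<Sum>i<j. (h i j :: int))"
proof (induction n)
  case 0 then show ?case by simp
next
  case (Suc n)
  have eq: "{(r1, r2). r1 < r2 \<and> r2 < Suc n} = {(r1, r2). r1 < r2 \<and> r2 < n} \<union> (\<lambda>i. (i, n)) ` {..<n}"
    by auto
  have fin: "finite {(r1, r2). r1 < r2 \<and> r2 < n}"
    by (rule finite_subset[of _ "{..<n} \<times> {..<n}"]) auto
  have dis: "{(r1, r2). r1 < r2 \<and> r2 < n} \<inter> (\<lambda>i. (i, n)) ` {..<n} = {}" by auto
  have inj: "inj_on (\<lambda>i. (i, n)) {..<n}" by (auto simp: inj_on_def)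
  have "(\<Sum>(r1, r2) \<in> {(r1, r2). r1 < r2 \<and> r2 < Suc n}. h r1 r2)
     = (\<Sum>(r1, r2) \<in> {(r1, r2). r1 < r2 \<and> r2 < n}. h r1 r2) + (\<Sum>(r1, r2) \<in> (\<lambda>i. (i, n)) ` {..<n}. h r1 r2)"
    unfolding eq by (rule sum.union_disjoint[OF fin _ dis]) auto
  also have "(\<Sum>(r1, r2) \<in> (\<lambda>i. (i, n)) ` {..<n}. h r1 r2) = (\<Sum>i<n. h i n)"
    by (simp add: sum.reindex[OF inj])
  finally show ?case using Suc by simp
qed

lemma key_ineq: "(x::int) mod 6 = 4 \<Longrightarrow> 8 + x \<le> 3 * \<bar>x\<bar>"
  by presburger

theorem theorem3:
  fixes n :: nat and L :: "nat \<Rightarrow> nat \<Rightarrow> nat"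
  assumes "n > 0" and "n mod 3 = 1" and "latin_square n L"
  shows "imbalance n L \<ge> 4 * of_nat n * (of_nat n - 1) / 9"
proof -
  note ls = assms(3)
  define D where "D i j = row_dist n L i j" for i j
  define T where "T = (\<Sum>i<n. \<Sum>j<n. \<bar>int i - int j\<bar>)"
  define c where "c = int n * (int n + 1)"
  have Dsym: "D i j = D j i" for i j
    unfolding D_def row_dist_def by (rule sum.cong) auto
  have Ddiag: "D i i = 0" for i unfolding D_def row_dist_def by simp
  have sumQ: "(\<Sum>i<n. \<Sum>j<n. D i j) = int n * T"
  proof -
    have "(\<Sum>i<n. \<Sum>j<n. D i j) = (\<Sum>i<n. \<Sum>j<n. \<Sum>s<n. \<bar>int (pos n L i s) - int (pos n L j s)\<bar>)"
      unfolding D_def row_dist_def by simp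
    also have "\<dots> = (\<Sum>i<n. \<Sum>s<n. \<Sum>j<n. \<bar>int (pos n L i s) - int (pos n L j s)\<bar>)"
      by (rule sum.cong[OF refl], rule sum.swap)
    also have "\<dots> = (\<Sum>s<n. \<Sum>i<n. \<Sum>j<n. \<bar>int (pos n L i s) - int (pos n L j s)\<bar>)"
      by (rule sum.swap)
    also have "\<dots> = (\<Sum>s<n. T)"
    proof (rule sum.cong[OF refl])
      fix s assume "s \<in> {..<n}"
      then show "(\<Sum>i<n. \<Sum>j<n. \<bar>int (pos n L i s) - int (pos n L j s)\<bar>) = T"
        unfolding T_def using reindex2[OF bij_col[OF ls], of s "\<lambda>a b. \<bar>int a - int b\<bar>"] by simp
    qed
    finally show ?thesis by simp
  qed
  have sumP: "2 * (\<Sum>j<n. \<Sum>i<j. D i j) = int n * T"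
    using symsplit[of D n] Dsym Ddiag sumQ by simp
  have cardP: "2 * (\<Sum>j<n. \<Sum>i<j. (1::int)) = int n * (int n - 1)"
    using symsplit[of "\<lambda>i j. (1::int)" n] by (simp add: algebra_simps)
  have sumx: "(\<Sum>j<n. \<Sum>i<j. 3 * D i j - c) = 0"
  proof -
    have "(\<Sum>j<n. \<Sum>i<j. 3 * D i j - c) = 3 * (\<Sum>j<n. \<Sum>i<j. D i j) - c * (\<Sum>j<n. \<Sum>i<j. (1::int))"
      by (simp add: sum_subtractf sum_distrib_left mult.commute)
    note e1 = this
    have "2 * (\<Sum>j<n. \<Sum>i<j. 3 * D i j - c) = 3 * (int n * T) - c * (int n * (int n - 1))"
    proof -
      have g: "2 * X = 3 * P - c * Q" if "X = 3 * A - c * B" "2 * A = P" "2 * B = Q" for X A B P Q :: int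
        unfolding that(2,3)[symmetric] that(1) by (simp add: algebra_simps)
      show ?thesis by (rule g[OF e1 sumP cardP])
    qed
    also have "\<dots> = 0"
    proof -
      have g: "3 * (N * T') - N * (N + 1) * (N * (N - 1)) = 0" if h: "3 * T' = N * (N + 1) * (N - 1)" for N T' :: int
      proof -
        have "3 * (N * T') - N * (N + 1) * (N * (N - 1)) = N * (3 * T') - N * (N * (N + 1) * (N - 1))"
          by (simp add: algebra_simps)
        also have "\<dots> = 0" unfolding h by simp
        finally show ?thesis .
      qed
      show ?thesis unfolding c_def using g[OF Tval[of n, folded T_def]] .
    qed
    finally show ?thesis by simp
  qed
  have sumc: "(\<Sum>s<n. int (pos n L r s)) = (\<Sum>s<n. int s)" if "r < n" for r
    using sum.reindex_bij_betw[OF bij_row[OF ls that], of int] by simp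
  have Deven: "even (D i j)" if "i < n" "j < n" for i j
  proof -
    have "D i j + (\<Sum>s<n. int (pos n L i s)) + (\<Sum>s<n. int (pos n L j s))
        = (\<Sum>s<n. 2 * max (int (pos n L i s)) (int (pos n L j s)))"
      unfolding D_def row_dist_def by (simp add: sum.distrib[symmetric]) (rule sum.cong, auto)
    then have "D i j = 2 * ((\<Sum>s<n. max (int (pos n L i s)) (int (pos n L j s))) - (\<Sum>s<n. int s))"
      using sumc[OF that(1)] sumc[OF that(2)] by (simp add: sum_distrib_left[symmetric] algebra_simps)
    then show ?thesis by simp
  qed
  have xmod: "(3 * D i j - c) mod 6 = 4" if ij: "i < n" "j < n" for i j
  proof -
    obtain k where k: "D i j = 2 * k" using Deven[OF ij] by auto
    obtain m where m: "n = 3 * m + 1" using assms(2) by (metis mod_div_mult_eq add.commute mult.commute)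
    have c9: "c = 9 * (int m * (int m + 1)) + 2" unfolding c_def m by (simp add: algebra_simps)
    have "even (int m * (int m + 1))" by simp
    then obtain t where t: "int m * (int m + 1) = 2 * t" by (rule evenE)
    have e: "3 * D i j - c = 4 + (k - 3 * t - 1) * 6" unfolding k c9 t by (simp add: algebra_simps)
    show ?thesis unfolding e by (simp only: mod_mult_self1) simp
  qed
  have "(\<Sum>j<n. \<Sum>i<j. 8 + (3 * D i j - c)) \<le> (\<Sum>j<n. \<Sum>i<j. 3 * \<bar>3 * D i j - c\<bar>)"
    by (rule sum_mono, rule sum_mono, rule key_ineq, rule xmod) auto
  moreover have "(\<Sum>j<n. \<Sum>i<j. 8 + (3 * D i j - c)) = 8 * (\<Sum>j<n. \<Sum>i<j. (1::int)) + (\<Sum>j<n. \<Sum>i<j. 3 * D i j - c)"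
    by (simp add: sum.distrib sum_distrib_left sum_distrib_right mult.commute)
  moreover have "(\<Sum>j<n. \<Sum>i<j. 3 * \<bar>3 * D i j - c\<bar>) = 3 * (\<Sum>j<n. \<Sum>i<j. \<bar>3 * D i j - c\<bar>)"
    by (simp add: sum_distrib_left)
  ultimately have main: "4 * (int n * (int n - 1)) \<le> 3 * (\<Sum>j<n. \<Sum>i<j. \<bar>3 * D i j - c\<bar>)"
    using sumx cardP by linarith
  have imb: "imbalance n L = (1/3) * of_int (\<Sum>j<n. \<Sum>i<j. \<bar>3 * D i j - c\<bar>)"
    unfolding imbalance_def D_def c_def by (simp add: pairsum[of "\<lambda>r1 r2. \<bar>3 * row_dist n L r1 r2 - int n * (int n + 1)\<bar>"])
  have "(of_int (4 * (int n * (int n - 1))) :: rat) \<le> of_int (3 * (\<Sum>j<n. \<Sum>i<j. \<bar>3 * D i j - c\<bar>))"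
    using main by linarith
  then show ?thesis unfolding imb by simp
qed

end
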